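(* In the setting below, suppose $k\le 50$ and $|S|\le 626$. Then none of $g_1,\dots,g_k$ lies in $G_-$; i.e., the subgraph $P$ of $H$ induced on $G_-$ and the subgraph $R$ of $H$ induced on $\{g_1,\dots,g_k\}$ are vertex disjoint.
   Context: Let $\Lambda_{24}$ be the Leech lattice scaled so minimal vectors have length $2$, $\mathcal C$ its set of $196560$ minimal vectors, and $\mathrm{Co}_0$ the finite group of linear isometries of $\mathbb{R}^{24}$ mapping $\Lambda_{24}$ onto itself (it acts transitively on $\mathcal C$). Fix an antipodal ($S=-S$) set $S\subseteq\mathcal C$ with $\langle x,y\rangle\le1$ for distinct $x,y\in S$. Let $k\ge1$, $S_1=S$, $g_1=\mathrm{id}$, and for $2\le j\le k$, $S_j=g_jS\setminus(S_1\cup\dots\cup S_{j-1})$ for some $g_j\in\mathrm{Co}_0$, with $|S_j|\ge|S|\bigl(1-\sum_{i<j}|S_i|/|\mathcal C|\bigr)$. Put $U_k=S_1\cup\dots\cup S_k$, $E_k=\mathbb{E}_g|gS\cap U_k|$ ($g$ uniform in $\mathrm{Co}_0$), $\delta(g)=|gS\cap U_k|-E_k$, $G_-=\{g\in\mathrm{Co}_0:\delta(g)<0\}$. $H$ is the graph on vertex set $\mathrm{Co}_0$ with $g,g'$ adjacent iff $gS\cap g'S=\emptyset$. *)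

theory Defs
  imports "HOL-Analysis.Analysis"
begin

text \<open>The Leech lattice (in its unimodular scaling, minimal vectors of length 2),
characterised as an even unimodular lattice in R^24 without roots (vectors of norm 2).
It is unique up to isometry, so quantifying over all such lattices is faithful.\<close>
definition leech_lattice :: "(real^24) set \<Rightarrow> bool" where
  "leech_lattice L \<longleftrightarrow>
     (\<exists>b :: 24 \<Rightarrow> real^24.
        L = {(\<Sum>i\<in>UNIV. of_int (c i) *\<^sub>R b i) | c :: 24 \<Rightarrow> int. True} \<and>
        \<bar>det (\<chi> i. b i)\<bar> = 1) \<and>
     (\<forall>x\<in>L. \<forall>y\<in>L. x \<bullet> y \<in> \<int>) \<and>
     (\<forall>x\<in>L. \<exists>n::int. x \<bullet> x = 2 * of_int n) \<and>
     (\<forall>x\<in>L. x \<bullet> x \<noteq> 2)"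

definition min_vectors :: "(real^24) set \<Rightarrow> (real^24) set" where
  "min_vectors L = {x\<in>L. norm x = 2}"

definition Co0 :: "(real^24) set \<Rightarrow> (real^24 \<Rightarrow> real^24) set" where
  "Co0 L = {g. orthogonal_transformation g \<and> g ` L = L}"

text \<open>Useq g S j = S_1 \<union> ... \<union> S_j, where S_j = g_j S minus the earlier ones.\<close>
primrec Useq :: "(nat \<Rightarrow> 'a \<Rightarrow> 'a) \<Rightarrow> 'a set \<Rightarrow> nat \<Rightarrow> 'a set" where
  "Useq g S 0 = {}"
| "Useq g S (Suc j) = Useq g S j \<union> (g (Suc j) ` S - Useq g S j)"

definition Sseq :: "(nat \<Rightarrow> 'a \<Rightarrow> 'a) \<Rightarrow> 'a set \<Rightarrow> nat \<Rightarrow> 'a set" where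
  "Sseq g S j = g j ` S - Useq g S (j - 1)"

definition Eavg :: "(real^24) set \<Rightarrow> (real^24) set \<Rightarrow> (real^24) set \<Rightarrow> real" where
  "Eavg L S U = (\<Sum>h\<in>Co0 L. real (card (h ` S \<inter> U))) / real (card (Co0 L))"

definition delta :: "(real^24) set \<Rightarrow> (real^24) set \<Rightarrow> (real^24) set \<Rightarrow> (real^24 \<Rightarrow> real^24) \<Rightarrow> real" where
  "delta L S U h = real (card (h ` S \<inter> U)) - Eavg L S U"

definition Gminus :: "(real^24) set \<Rightarrow> (real^24) set \<Rightarrow> (real^24) set \<Rightarrow> (real^24 \<Rightarrow> real^24) set" where
  "Gminus L S U = {h\<in>Co0 L. delta L S U h < 0}"

end

theory Submission
  imports Defs
begin

lemma useq_sub: "1 \<le> j \<Longrightarrow> j \<le> k \<Longrightarrow> g j ` S \<subseteq> Useq g S k"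
proof (induction k)
  case 0 then show ?case by simp
next
  case (Suc k)
  show ?case
  proof (cases "j = Suc k")
    case True then show ?thesis by auto
  next
    case False then show ?thesis using Suc by auto
  qed
qed

lemma sep_finite:
  fixes S :: "(real^24) set"
  assumes "\<forall>x\<in>S. norm x = 2" and "\<forall>x\<in>S. \<forall>y\<in>S. x \<noteq> y \<longrightarrow> x \<bullet> y \<le> 1"
  shows "finite S"
proof (rule ccontr)
  assume inf: "infinite S"
  have sub: "S \<subseteq> cball 0 2" using assms(1) by (auto simp: dist_norm)
  obtain x where "x islimpt S"
    using Heine_Borel_imp_Bolzano_Weierstrass[OF compact_cball inf sub] by blast
  then obtain y where y: "y \<in> S" "y \<noteq> x" "dist y x < 1"
    using islimpt_approachable[of x S] by (meson zero_less_one)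
  have "0 < min 1 (dist y x)" using y by simp
  then obtain z where z: "z \<in> S" "z \<noteq> x" "dist z x < min 1 (dist y x)"
    using \<open>x islimpt S\<close> islimpt_approachable[of x S] by blast
  have yz: "y \<noteq> z" using z by auto
  have d: "dist y z < 2" using y z dist_triangle2[of y z x] by simp
  have "(norm (y - z))^2 = norm y ^2 + norm z ^2 - 2 * (y \<bullet> z)"
    by (simp add: power2_norm_eq_inner inner_diff_left inner_diff_right inner_commute)
  also have "\<dots> \<ge> 6" using assms y z yz by simp
  finally have "(norm (y - z))^2 \<ge> 6" .
  moreover have "(norm (y - z))^2 < 4"
    using d by (metis dist_norm norm_ge_zero power_strict_mono[of _ 2 2] numeral_le_iff
        power2_eq_square real_sqrt_four real_sqrt_less_iff zero_less_numeral semiring_norm(71)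
        less_eq_real_def real_sqrt_pow2_iff abs_of_nonneg)
  ultimately show False by simp
qed

theorem lemma4p6:
  fixes L :: "(real^24) set" and S :: "(real^24) set"
    and g :: "nat \<Rightarrow> real^24 \<Rightarrow> real^24" and k :: nat
  assumes "leech_lattice L"
    and "S \<subseteq> min_vectors L"
    and "\<forall>x\<in>S. - x \<in> S"
    and "\<forall>x\<in>S. \<forall>y\<in>S. x \<noteq> y \<longrightarrow> x \<bullet> y \<le> 1"
    and "k \<ge> 1"
    and "g 1 = id"
    and "\<forall>j\<in>{2..k}. g j \<in> Co0 L"
    and "\<forall>j\<in>{2..k}. real (card (Sseq g S j)) \<ge>
           real (card S) * (1 - (\<Sum>i\<in>{1..<j}. real (card (Sseq g S i))) / real (card (min_vectors L)))"
    and "k \<le> 50"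
    and "card S \<le> 626"
  shows "Gminus L S (Useq g S k) \<inter> g ` {1..k} = {}"
proof -
  have finS: "finite S"
    by (rule sep_finite) (use assms(2,4) in \<open>auto simp: min_vectors_def\<close>)
  define U where "U = Useq g S k"
  have Ele: "Eavg L S U \<le> real (card S)"
  proof -
    have "(\<Sum>h\<in>Co0 L. real (card (h ` S \<inter> U))) \<le> (\<Sum>h\<in>Co0 L. real (card S))"
    proof (rule sum_mono)
      fix h show "real (card (h ` S \<inter> U)) \<le> real (card S)"
        using finS card_mono[of "h ` S" "h ` S \<inter> U"] card_image_le[of S h] by auto
    qed
    also have "\<dots> = real (card (Co0 L)) * real (card S)" by simp
    finally show ?thesis unfolding Eavg_def
      by (cases "card (Co0 L) = 0") (auto simp: field_simps)
  qed
  show ?thesis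
  proof (rule ccontr)
    assume "Gminus L S (Useq g S k) \<inter> g ` {1..k} \<noteq> {}"
    then obtain j where j: "j \<in> {1..k}" "g j \<in> Gminus L S U" unfolding U_def by blast
    have "g j \<in> Co0 L" using j by (simp add: Gminus_def)
    then have inj: "inj (g j)" by (simp add: Co0_def orthogonal_transformation_inj)
    have "g j ` S \<inter> U = g j ` S" using useq_sub[of j k g S] j unfolding U_def by auto
    then have "card (g j ` S \<inter> U) = card S" using inj card_image[of "g j" S]
      by (simp add: inj_on_subset)
    then have "delta L S U (g j) \<ge> 0" using Ele by (simp add: delta_def)
    then show False using j by (simp add: Gminus_def)
  qed
qed

end
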